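(* Let $\boldsymbol\varphi$ be a random variable whose distribution is determined by a parameter $\theta\in\Theta\subseteq\mathbb{R}$, and let $I_{\boldsymbol\varphi}$ denote the support of $\boldsymbol\varphi$. Let $\mathbb{F}(\cdot,\cdot)$ and $\mathbb{G}(\cdot,\cdot)$ be bivariate functions such that: (i) for each $z\in I_{\boldsymbol\varphi}$, $\mathbb{F}(z,\vartheta)$ is non-increasing in $\vartheta\ge z$; (ii) for each $z\in I_{\boldsymbol\varphi}$, $\mathbb{G}(z,\vartheta)$ is non-decreasing in $\vartheta\le z$; (iii) $\Pr\{\boldsymbol\varphi\le z\mid\theta\}\le\mathbb{F}(z,\theta)$ for $z$ no greater than $\theta\in\Theta$, and $\Pr\{\boldsymbol\varphi\ge z\mid\theta\}\le\mathbb{G}(z,\theta)$ for $z$ no less than $\theta\in\Theta$. Let $\delta\in(0,1)$, and let $L(\boldsymbol\varphi,\delta)$ and $U(\boldsymbol\varphi,\delta)$ be functions of $\boldsymbol\varphi$ and $\delta$ such that the event $$\Big\{\mathbb{F}(\boldsymbol\varphi,U(\boldsymbol\varphi,\delta))\le\tfrac\delta2,\ \mathbb{G}(\boldsymbol\varphi,L(\boldsymbol\varphi,\delta))\le\tfrac\delta2,\ L(\boldsymbol\varphi,\delta)\le\boldsymbol\varphi\le U(\boldsymbol\varphi,\delta)\Big\}$$ is a sure event. Then $\Pr\{L(\boldsymbol\varphi,\delta)\le\theta\le U(\boldsymbol\varphi,\delta)\mid\theta\}\ge1-\delta$ for every $\theta\in\Theta$.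
   Context: $\Pr\{\cdot\mid\theta\}$ denotes probability when the distribution of $\boldsymbol\varphi$ has parameter $\theta$. *)

theory Defs
  imports "HOL-Probability.Probability"
begin

end

theory Submission
  imports Defs
begin

lemma key:
  fixes N :: "'a measure" and X :: "'a \<Rightarrow> real" and H :: "real \<Rightarrow> real"
  assumes c0: "0 \<le> c" and ps: "prob_space N" and Xm: "X \<in> borel_measurable N"
    and bnd: "\<And>z. z \<le> \<theta> \<Longrightarrow> measure N {\<omega> \<in> space N. X \<omega> \<le> z} \<le> H z"
  shows "\<exists>A \<in> sets N. measure N A \<le> c \<and> {\<omega> \<in> space N. X \<omega> \<le> \<theta> \<and> H (X \<omega>) \<le> c} \<subseteq> A"
proof -
  interpret prob_space N by (fact ps)
  have ms: "\<And>z. {\<omega> \<in> space N. X \<omega> \<le> z} \<in> sets N" using Xm by measurable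
  define S where "S = {X \<omega> | \<omega>. \<omega> \<in> space N \<and> X \<omega> \<le> \<theta> \<and> H (X \<omega>) \<le> c}"
  show ?thesis
  proof (cases "S = {}")
    case True
    then show ?thesis by (intro bexI[of _ "{}"]) (auto simp: S_def c0)
  next
    case ne: False
    have bdd: "bdd_above S" unfolding S_def by (intro bdd_aboveI[of _ \<theta>]) auto
    define s where "s = Sup S"
    have up: "\<And>x. x \<in> S \<Longrightarrow> x \<le> s" unfolding s_def using bdd by (simp add: cSup_upper)
    have sth: "s \<le> \<theta>" unfolding s_def using ne by (intro cSup_least) (auto simp: S_def c0)
    have inS: "\<And>z. z \<in> S \<Longrightarrow> z \<le> \<theta> \<and> H z \<le> c" by (auto simp: S_def c0)
    show ?thesis
    proof (cases "s \<in> S")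
      case True
      show ?thesis
      proof (intro bexI[of _ "{\<omega> \<in> space N. X \<omega> \<le> s}"] conjI)
        show "measure N {\<omega> \<in> space N. X \<omega> \<le> s} \<le> c" using bnd[OF sth] inS[OF True] by linarith
        show "{\<omega> \<in> space N. X \<omega> \<le> \<theta> \<and> H (X \<omega>) \<le> c} \<subseteq> {\<omega> \<in> space N. X \<omega> \<le> s}"
          using up by (auto simp: S_def c0)
      qed (rule ms)
    next
      case False
      define B where "B n = {\<omega> \<in> space N. X \<omega> \<le> s - 1 / Suc n}" for n
      have Bm: "range B \<subseteq> sets N" using ms by (auto simp: B_def)
      have inc: "incseq B" unfolding B_def
        by (intro monoI) (auto simp: frac_le elim!: order_trans intro!: divide_left_mono)
      have Bc: "measure N (B n) \<le> c" for n
      proof -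
        have "s - 1 / Suc n < Sup S" unfolding s_def[symmetric] by simp
        then obtain z where z: "z \<in> S" "s - 1 / Suc n < z" using ne bdd by (auto simp: less_cSup_iff)
        have "measure N (B n) \<le> measure N {\<omega> \<in> space N. X \<omega> \<le> z}"
          unfolding B_def using z(2) by (intro finite_measure_mono ms) auto
        also have "\<dots> \<le> H z" using bnd inS[OF z(1)] by blast
        finally show ?thesis using inS[OF z(1)] by linarith
      qed
      have Ueq: "(\<Union>n. B n) = {\<omega> \<in> space N. X \<omega> < s}"
      proof safe
        fix \<omega> assume "\<omega> \<in> space N" "X \<omega> < s"
        then obtain n where "1 / Suc n < s - X \<omega>"
          using reals_Archimedean[of "s - X \<omega>"] by (auto simp: inverse_eq_divide)
        then have "X \<omega> \<le> s - 1 / Suc n" by linarith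
        then show "\<omega> \<in> (\<Union>n. B n)" using \<open>\<omega> \<in> space N\<close> unfolding B_def by blast
      next
        fix \<omega> n assume "\<omega> \<in> B n"
        moreover have "(0::real) < 1 / Suc n" by simp
        ultimately show "X \<omega> < s" unfolding B_def by (smt (verit) mem_Collect_eq)
      next
        fix \<omega> n assume "\<omega> \<in> B n" then show "\<omega> \<in> space N" unfolding B_def by auto
      qed
      have "(\<lambda>n. measure N (B n)) \<longlonglongrightarrow> measure N (\<Union>n. B n)"
        by (rule finite_Lim_measure_incseq[OF Bm inc])
      hence lim: "measure N (\<Union>n. B n) \<le> c" by (rule LIMSEQ_le_const2) (auto intro: Bc)
      show ?thesis
      proof (intro bexI[of _ "{\<omega> \<in> space N. X \<omega> < s}"] conjI)
        show "measure N {\<omega> \<in> space N. X \<omega> < s} \<le> c" using lim Ueq by simp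
        show "{\<omega> \<in> space N. X \<omega> \<le> \<theta> \<and> H (X \<omega>) \<le> c} \<subseteq> {\<omega> \<in> space N. X \<omega> < s}"
          using up False by (force simp: S_def order.order_iff_strict)
      qed (use Xm in measurable)
    qed
  qed
qed

theorem theorem7:
  fixes M :: "real \<Rightarrow> 'a measure"
    and \<Omega> :: "'a set"
    and \<phi> :: "'a \<Rightarrow> real"
    and \<Theta> :: "real set"
    and F G :: "real \<Rightarrow> real \<Rightarrow> real"
    and L U :: "real \<Rightarrow> real \<Rightarrow> real"
    and \<delta> :: real
  assumes prob: "\<And>\<theta>. \<theta> \<in> \<Theta> \<Longrightarrow> prob_space (M \<theta>)"
    and space: "\<And>\<theta>. \<theta> \<in> \<Theta> \<Longrightarrow> space (M \<theta>) = \<Omega>"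
    and meas: "\<And>\<theta>. \<theta> \<in> \<Theta> \<Longrightarrow> \<phi> \<in> borel_measurable (M \<theta>)"
    and F_mono: "\<And>z a b. z \<in> \<phi> ` \<Omega> \<Longrightarrow> z \<le> a \<Longrightarrow> a \<le> b \<Longrightarrow> F z b \<le> F z a"
    and G_mono: "\<And>z a b. z \<in> \<phi> ` \<Omega> \<Longrightarrow> a \<le> b \<Longrightarrow> b \<le> z \<Longrightarrow> G z a \<le> G z b"
    and F_bound: "\<And>\<theta> z. \<theta> \<in> \<Theta> \<Longrightarrow> z \<le> \<theta> \<Longrightarrow>
                    measure (M \<theta>) {\<omega> \<in> \<Omega>. \<phi> \<omega> \<le> z} \<le> F z \<theta>"
    and G_bound: "\<And>\<theta> z. \<theta> \<in> \<Theta> \<Longrightarrow> \<theta> \<le> z \<Longrightarrow>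
                    measure (M \<theta>) {\<omega> \<in> \<Omega>. \<phi> \<omega> \<ge> z} \<le> G z \<theta>"
    and delta: "0 < \<delta>" "\<delta> < 1"
    and sure: "\<And>\<omega>. \<omega> \<in> \<Omega> \<Longrightarrow>
                 F (\<phi> \<omega>) (U (\<phi> \<omega>) \<delta>) \<le> \<delta> / 2 \<and>
                 G (\<phi> \<omega>) (L (\<phi> \<omega>) \<delta>) \<le> \<delta> / 2 \<and>
                 L (\<phi> \<omega>) \<delta> \<le> \<phi> \<omega> \<and> \<phi> \<omega> \<le> U (\<phi> \<omega>) \<delta>"
    and event_meas: "\<And>\<theta>. \<theta> \<in> \<Theta> \<Longrightarrow>
                 {\<omega> \<in> \<Omega>. L (\<phi> \<omega>) \<delta> \<le> \<theta> \<and> \<theta> \<le> U (\<phi> \<omega>) \<delta>} \<in> sets (M \<theta>)"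
  shows "\<forall>\<theta>\<in>\<Theta>. measure (M \<theta>) {\<omega> \<in> \<Omega>. L (\<phi> \<omega>) \<delta> \<le> \<theta> \<and> \<theta> \<le> U (\<phi> \<omega>) \<delta>} \<ge> 1 - \<delta>"
proof
  fix \<theta> assume th: "\<theta> \<in> \<Theta>"
  let ?N = "M \<theta>"
  interpret prob_space ?N by (rule prob[OF th])
  have sp: "space ?N = \<Omega>" by (rule space[OF th])
  have d0: "0 \<le> \<delta> / 2" using delta by simp
  obtain A where A: "A \<in> sets ?N" "measure ?N A \<le> \<delta> / 2"
     "{\<omega> \<in> space ?N. \<phi> \<omega> \<le> \<theta> \<and> F (\<phi> \<omega>) \<theta> \<le> \<delta> / 2} \<subseteq> A"
    using key[OF d0 prob[OF th] meas[OF th], of \<theta> "\<lambda>z. F z \<theta>"] F_bound[OF th] sp by auto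
  have mneg: "(\<lambda>\<omega>. - \<phi> \<omega>) \<in> borel_measurable ?N" using meas[OF th] by measurable
  have gb: "measure ?N {\<omega> \<in> space ?N. - \<phi> \<omega> \<le> z} \<le> G (- z) \<theta>" if "z \<le> - \<theta>" for z
  proof -
    have "{\<omega> \<in> space ?N. - \<phi> \<omega> \<le> z} = {\<omega> \<in> \<Omega>. \<phi> \<omega> \<ge> - z}" using sp by auto
    then show ?thesis using G_bound[OF th, of "- z"] that by simp
  qed
  obtain B where B: "B \<in> sets ?N" "measure ?N B \<le> \<delta> / 2"
     "{\<omega> \<in> space ?N. - \<phi> \<omega> \<le> - \<theta> \<and> G (- (- \<phi> \<omega>)) \<theta> \<le> \<delta> / 2} \<subseteq> B"
    using key[OF d0 prob[OF th] mneg, of "- \<theta>" "\<lambda>z. G (- z) \<theta>"] gb by auto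
  define E where "E = {\<omega> \<in> \<Omega>. L (\<phi> \<omega>) \<delta> \<le> \<theta> \<and> \<theta> \<le> U (\<phi> \<omega>) \<delta>}"
  have Em: "E \<in> sets ?N" unfolding E_def by (rule event_meas[OF th])
  have cov: "\<Omega> \<subseteq> E \<union> A \<union> B"
  proof
    fix \<omega> assume w: "\<omega> \<in> \<Omega>"
    have z: "\<phi> \<omega> \<in> \<phi> ` \<Omega>" using w by simp
    note s = sure[OF w]
    show "\<omega> \<in> E \<union> A \<union> B"
    proof (cases "U (\<phi> \<omega>) \<delta> < \<theta>")
      case True
      have "F (\<phi> \<omega>) \<theta> \<le> F (\<phi> \<omega>) (U (\<phi> \<omega>) \<delta>)"
        using F_mono[OF z, of "U (\<phi> \<omega>) \<delta>" \<theta>] s True by linarith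
      then have "\<omega> \<in> A" using A(3) s True w sp by auto
      then show ?thesis by simp
    next
      case False
      show ?thesis
      proof (cases "\<theta> < L (\<phi> \<omega>) \<delta>")
        case True
        have "G (\<phi> \<omega>) \<theta> \<le> G (\<phi> \<omega>) (L (\<phi> \<omega>) \<delta>)"
          using G_mono[OF z, of \<theta> "L (\<phi> \<omega>) \<delta>"] s True by linarith
        then have "\<omega> \<in> B" using B(3) s True w sp by auto
        then show ?thesis by simp
      next
        case False2: False
        then show ?thesis using False w unfolding E_def by auto
      qed
    qed
  qed
  have "1 = measure ?N \<Omega>" using prob_space sp by simp
  also have "\<dots> \<le> measure ?N (E \<union> A \<union> B)"
    using cov Em A(1) B(1) by (intro finite_measure_mono) auto
  also have "\<dots> \<le> measure ?N E + measure ?N A + measure ?N B"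
    using Em A(1) B(1) by (meson measure_Un_le sets.Un add_right_mono order_trans emeasure_neq_0_sets finite_emeasure_space sets.sets_into_space)
  finally have "1 \<le> measure ?N E + measure ?N A + measure ?N B" .
  then show "measure ?N {\<omega> \<in> \<Omega>. L (\<phi> \<omega>) \<delta> \<le> \<theta> \<and> \<theta> \<le> U (\<phi> \<omega>) \<delta>} \<ge> 1 - \<delta>"
    using A(2) B(2) unfolding E_def by linarith
qed

end
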